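(* Fix integers $n\ge k\ge 1$, put $m=n-k$, and fix a partition $\lambda=(\lambda_1\ge\lambda_2\ge\cdots\ge\lambda_k\ge 0)$ with $\lambda_1\le m$. There is a bijection $\Phi$ from the set of Condensed Catalan tableaux of size $(k,n)$ and shape $\lambda$ to the set of weighted Catalan paths constrained by $\lambda$ which is weight-preserving in the sense that, for every such tableau $T$, the product of all symbols $\alpha,\beta$ in the filling of $T$ equals the weight of the path $\Phi(T)$. (Equivalently, $\mathrm{wt}(T)=\alpha^{k}\beta^{n-k}\cdot \mathrm{wt}(\Phi(T))$.)
   Context: The Young diagram of $\lambda$ (English convention) consists of boxes $(r,c)$ with $1\le r\le k$, $1\le c\le\lambda_r$; row $1$ is the top row and column $1$ the leftmost. A Condensed Catalan tableau of size $(k,n)$ and shape $\lambda$ is an assignment to each box of $\lambda$ of one of: $\alpha$, $\beta$, or empty, such that: (ii) if box $(r,c)$ contains $\beta$, every box $(r,c')$ with $c'<c$ is empty; (iii) if box $(r,c)$ contains $\alpha$, every box $(r',c)$ with $r'<r$ is empty; (iv) every box $(r,c)$ such that there is no $\alpha$ in any box $(r',c)$ with $r'>r$ and no $\beta$ in any box $(r,c')$ with $c'>c$ contains $\alpha$ or $\beta$. Its weight is $\mathrm{wt}(T)=\alpha^{k+a}\beta^{n-k+b}$, where $a$ and $b$ are the numbers of $\alpha$'s and $\beta$'s in the filling. Place $\lambda$ in the rectangle $[0,m]\times[0,k]$ of the plane, box $(r,c)$ occupying $[c-1,c]\times[k-r,k-r+1]$, and let $L$ be the lattice path from $(m,k)$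 to $(0,0)$ with unit south and west steps following the southeast boundary of $\lambda$ (so, with $\lambda_0:=m$ and $\lambda_{k+1}:=0$, the horizontal part of $L$ at height $y=k-i$ is the segment from $x=\lambda_{i+1}$ to $x=\lambda_i$, $0\le i\le k$). A Catalan path constrained by $\lambda$ is a lattice path from $(m,k)$ to $(0,0)$ with unit south and west steps that never crosses $L$; equivalently, it is determined by integers $C_1\ge C_2\ge\cdots\ge C_k\ge 0$ with $C_i\le\lambda_i$ for all $i$, where the unique south step crossing row $i$ (from height $k-i+1$ to $k-i$) is at $x=C_i$. Each step receives a label: a south step with $x>0$ (not on the west boundary of $\lambda$) gets $\beta$; a south step with $x=0$ gets $1$; a west step lying strictly above $L$ gets $\alpha$; a west step lying on $L$ gets $1$. The weight of the (weighted Catalan) path is the product of the labels of its steps. *)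

theory Defs
  imports Main
begin

datatype cell = Alpha | Beta | Empty

text \<open>A monomial alpha^a beta^b is represented by its exponent pair (a, b).\<close>
type_synonym monomial = "nat \<times> nat"

definition boxes :: "nat \<Rightarrow> (nat \<Rightarrow> nat) \<Rightarrow> (nat \<times> nat) set" where
  "boxes k lam = {(r, c). 1 \<le> r \<and> r \<le> k \<and> 1 \<le> c \<and> c \<le> lam r}"

definition is_partition :: "nat \<Rightarrow> nat \<Rightarrow> (nat \<Rightarrow> nat) \<Rightarrow> bool" where
  "is_partition k m lam \<longleftrightarrow>
     (\<forall>i j. 1 \<le> i \<longrightarrow> i \<le> j \<longrightarrow> j \<le> k \<longrightarrow> lam j \<le> lam i) \<and> lam 1 \<le> m"

definition is_cct :: "nat \<Rightarrow> (nat \<Rightarrow> nat) \<Rightarrow> (nat \<times> nat \<Rightarrow> cell) \<Rightarrow> bool" where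
  "is_cct k lam T \<longleftrightarrow>
     (\<forall>p. p \<notin> boxes k lam \<longrightarrow> T p = Empty) \<and>
     (\<forall>r c. (r, c) \<in> boxes k lam \<longrightarrow> T (r, c) = Beta \<longrightarrow>
        (\<forall>c'. 1 \<le> c' \<and> c' < c \<longrightarrow> T (r, c') = Empty)) \<and>
     (\<forall>r c. (r, c) \<in> boxes k lam \<longrightarrow> T (r, c) = Alpha \<longrightarrow>
        (\<forall>r'. 1 \<le> r' \<and> r' < r \<longrightarrow> T (r', c) = Empty)) \<and>
     (\<forall>r c. (r, c) \<in> boxes k lam \<longrightarrow>
        (\<forall>r'. r' > r \<and> (r', c) \<in> boxes k lam \<longrightarrow> T (r', c) \<noteq> Alpha) \<longrightarrow>
        (\<forall>c'. c' > c \<and> (r, c') \<in> boxes k lam \<longrightarrow> T (r, c') \<noteq> Beta) \<longrightarrow>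
        T (r, c) \<noteq> Empty)"

definition num_alpha :: "nat \<Rightarrow> (nat \<Rightarrow> nat) \<Rightarrow> (nat \<times> nat \<Rightarrow> cell) \<Rightarrow> nat" where
  "num_alpha k lam T = card {p \<in> boxes k lam. T p = Alpha}"

definition num_beta :: "nat \<Rightarrow> (nat \<Rightarrow> nat) \<Rightarrow> (nat \<times> nat \<Rightarrow> cell) \<Rightarrow> nat" where
  "num_beta k lam T = card {p \<in> boxes k lam. T p = Beta}"

definition symbol_product :: "nat \<Rightarrow> (nat \<Rightarrow> nat) \<Rightarrow> (nat \<times> nat \<Rightarrow> cell) \<Rightarrow> monomial" where
  "symbol_product k lam T = (num_alpha k lam T, num_beta k lam T)"

definition tableau_wt :: "nat \<Rightarrow> nat \<Rightarrow> (nat \<Rightarrow> nat) \<Rightarrow> (nat \<times> nat \<Rightarrow> cell) \<Rightarrow> monomial" where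
  "tableau_wt n k lam T = (k + num_alpha k lam T, (n - k) + num_beta k lam T)"

text \<open>Catalan path constrained by lam, encoded by C_1 \<ge> ... \<ge> C_k \<ge> 0, C_i \<le> lam_i;
  C is 0 outside 1..k (canonical representative).\<close>
definition is_cpath :: "nat \<Rightarrow> (nat \<Rightarrow> nat) \<Rightarrow> (nat \<Rightarrow> nat) \<Rightarrow> bool" where
  "is_cpath k lam C \<longleftrightarrow>
     (\<forall>i. (i < 1 \<or> k < i) \<longrightarrow> C i = 0) \<and>
     (\<forall>i j. 1 \<le> i \<longrightarrow> i \<le> j \<longrightarrow> j \<le> k \<longrightarrow> C j \<le> C i) \<and>
     (\<forall>i. 1 \<le> i \<and> i \<le> k \<longrightarrow> C i \<le> lam i)"

definition ext :: "nat \<Rightarrow> nat \<Rightarrow> (nat \<Rightarrow> nat) \<Rightarrow> nat \<Rightarrow> nat" where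
  "ext k m f i = (if i = 0 then m else if i \<le> k then f i else 0)"

text \<open>South steps: the one crossing row i (1 \<le> i \<le> k) is at x = C_i; label beta iff x > 0.\<close>
definition path_beta :: "nat \<Rightarrow> (nat \<Rightarrow> nat) \<Rightarrow> nat" where
  "path_beta k C = card {i. 1 \<le> i \<and> i \<le> k \<and> C i > 0}"

text \<open>West steps: at height k - i (0 \<le> i \<le> k) the path has west steps [x-1,x] for
  C_(i+1) < x \<le> C_i.  Such a step lies on L iff it lies in the horizontal part of L at
  that height, i.e. lam_(i+1) < x \<le> lam_i (i.e. [x-1,x] \<subseteq> [lam_(i+1), lam_i]);
  otherwise it lies strictly above L and is labelled alpha.\<close>
definition west_steps :: "nat \<Rightarrow> nat \<Rightarrow> (nat \<Rightarrow> nat) \<Rightarrow> (nat \<times> nat) set" where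
  "west_steps k m C = {(i, x). i \<le> k \<and> ext k m C (Suc i) < x \<and> x \<le> ext k m C i}"

definition path_alpha :: "nat \<Rightarrow> nat \<Rightarrow> (nat \<Rightarrow> nat) \<Rightarrow> (nat \<Rightarrow> nat) \<Rightarrow> nat" where
  "path_alpha k m lam C = card {(i, x) \<in> west_steps k m C.
      \<not> (ext k m lam (Suc i) < x \<and> x \<le> ext k m lam i)}"

definition path_wt :: "nat \<Rightarrow> nat \<Rightarrow> (nat \<Rightarrow> nat) \<Rightarrow> (nat \<Rightarrow> nat) \<Rightarrow> monomial" where
  "path_wt k m lam C = (path_alpha k m lam C, path_beta k C)"

end

theory Submission
  imports Defs
begin


definition gB :: "nat set \<Rightarrow> (nat \<Rightarrow> nat) \<Rightarrow> nat \<Rightarrow> (nat \<times> nat) set" where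
  "gB R lam w = {(r, c). r \<in> R \<and> 1 \<le> c \<and> c \<le> lam r \<and> c \<le> w}"

definition gcct :: "nat set \<Rightarrow> (nat \<Rightarrow> nat) \<Rightarrow> nat \<Rightarrow> (nat \<times> nat \<Rightarrow> cell) \<Rightarrow> bool" where
  "gcct R lam w T \<longleftrightarrow>
     (\<forall>p. p \<notin> gB R lam w \<longrightarrow> T p = Empty) \<and>
     (\<forall>r c. (r, c) \<in> gB R lam w \<longrightarrow> T (r, c) = Beta \<longrightarrow> (\<forall>c'. c' < c \<longrightarrow> T (r, c') = Empty)) \<and>
     (\<forall>r c. (r, c) \<in> gB R lam w \<longrightarrow> T (r, c) = Alpha \<longrightarrow> (\<forall>r'. r' < r \<longrightarrow> T (r', c) = Empty)) \<and>
     (\<forall>r c. (r, c) \<in> gB R lam w \<longrightarrow> (\<forall>r'. r' > r \<longrightarrow> T (r', c) \<noteq> Alpha) \<longrightarrow>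
        (\<forall>c'. c' > c \<longrightarrow> T (r, c') \<noteq> Beta) \<longrightarrow> T (r, c) \<noteq> Empty)"

definition upcl :: "nat set \<Rightarrow> nat set \<Rightarrow> bool" where
  "upcl S U \<longleftrightarrow> U \<subseteq> S \<and> (\<forall>r\<in>U. \<forall>r'\<in>S. r < r' \<longrightarrow> r' \<in> U)"

definition comb :: "nat \<Rightarrow> nat set \<Rightarrow> nat set \<Rightarrow> (nat \<times> nat \<Rightarrow> cell) \<Rightarrow> (nat \<times> nat \<Rightarrow> cell)" where
  "comb w S U T' = (\<lambda>(r, c). if c = w \<and> r \<in> S then (if r \<in> U then Beta
       else if r = Max (S - U) then Alpha else Empty) else T' (r, c))"

definition betas :: "(nat \<times> nat \<Rightarrow> cell) \<Rightarrow> nat \<Rightarrow> (nat \<times> nat) set" where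
  "betas T x = {p. x \<le> snd p \<and> T p = Beta}"

definition alphas :: "(nat \<times> nat \<Rightarrow> cell) \<Rightarrow> (nat \<times> nat) set" where
  "alphas T = {p. T p = Alpha}"

definition ell :: "nat set \<Rightarrow> (nat \<Rightarrow> nat) \<Rightarrow> nat \<Rightarrow> nat" where
  "ell R lam x = card {r \<in> R. x \<le> lam r}"

definition Eof :: "nat \<Rightarrow> (nat \<times> nat \<Rightarrow> cell) \<Rightarrow> nat \<Rightarrow> nat" where
  "Eof w T x = (if 1 \<le> x \<and> x \<le> w then card (betas T x) else 0)"

definition VV :: "nat set \<Rightarrow> (nat \<Rightarrow> nat) \<Rightarrow> nat \<Rightarrow> (nat \<Rightarrow> nat) set" where
  "VV R lam w = {E. (\<forall>x. (x = 0 \<or> w < x) \<longrightarrow> E x = 0) \<and>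
      (\<forall>x y. 1 \<le> x \<longrightarrow> x \<le> y \<longrightarrow> y \<le> w \<longrightarrow> E y \<le> E x) \<and>
      (\<forall>x. 1 \<le> x \<longrightarrow> x \<le> w \<longrightarrow> E x \<le> ell R lam x)}"

lemma finite_gB: "finite R \<Longrightarrow> finite (gB R lam w)"
  by (rule finite_subset[of _ "R \<times> {0..w}"]) (auto simp: gB_def)

lemma upcl_unique:
  assumes "finite S" "upcl S U1" "upcl S U2" "card U1 = card U2"
  shows "U1 = U2"
proof (rule ccontr)
  have f1: "finite U1" "finite U2" using assms by (auto simp: upcl_def intro: finite_subset)
  have key: "card V2 < card V1" if "finite S" "upcl S V1" "upcl S V2" "r \<in> V1" "r \<notin> V2" for V1 V2 r
  proof -
    have "V2 \<subseteq> V1 - {r}"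
    proof
      fix r' assume r': "r' \<in> V2"
      have "r \<in> S" "r' \<in> S" using that r' by (auto simp: upcl_def)
      then have "r < r'" using that r' unfolding upcl_def by (metis linorder_neqE_nat)
      then show "r' \<in> V1 - {r}" using that \<open>r' \<in> S\<close> unfolding upcl_def by auto
    qed
    moreover have "finite V1" using that by (auto simp: upcl_def intro: finite_subset)
    ultimately show ?thesis using that(4)
      by (metis card_Diff1_less card_mono dual_order.strict_trans2 finite_Diff)
  qed
  assume "U1 \<noteq> U2"
  then obtain r where "(r \<in> U1 \<and> r \<notin> U2) \<or> (r \<in> U2 \<and> r \<notin> U1)" by blast
  then show False using key[of U1 U2 r] key[of U2 U1 r] assms(1-4) by (metis less_irrefl)
qed

lemma upcl_exists:
  assumes "finite S" "j \<le> card S"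
  shows "\<exists>U. upcl S U \<and> card U = j"
  using assms(2)
proof (induction j)
  case 0
  show ?case by (rule exI[of _ "{}"]) (simp add: upcl_def)
next
  case (Suc j)
  then obtain U where U: "upcl S U" "card U = j" by auto
  have US: "U \<subseteq> S" using U by (simp add: upcl_def)
  have fU: "finite U" using US assms(1) by (rule finite_subset)
  have "card U < card S" using U Suc.prems by simp
  then have ne: "S - U \<noteq> {}" using US by auto
  define a where "a = Max (S - U)"
  have fin: "finite (S - U)" using assms(1) by simp
  have a: "a \<in> S - U" unfolding a_def using ne fin by (rule Max_in[rotated])
  have amax: "\<And>r. r \<in> S - U \<Longrightarrow> r \<le> a" using fin a_def by simp
  have "upcl S (insert a U)"
    unfolding upcl_def
  proof (intro conjI ballI impI)
    show "insert a U \<subseteq> S" using a US by blast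
  next
    fix r r' assume r: "r \<in> insert a U" and r': "r' \<in> S" "r < r'"
    show "r' \<in> insert a U"
    proof (cases "r = a")
      case True
      then have "r' \<notin> S - U" using amax r' by force
      then show ?thesis using r' by blast
    next
      case False
      then have "r \<in> U" using r by simp
      then show ?thesis using U r' unfolding upcl_def by blast
    qed
  qed
  moreover have "card (insert a U) = Suc j" using a fU U by simp
  ultimately show ?case by blast
qed


lemma comb_apply: "comb w S U T' (r, c) = (if c = w \<and> r \<in> S then (if r \<in> U then Beta
       else if r = Max (S - U) then Alpha else Empty) else T' (r, c))"
  unfolding comb_def prod.case ..

lemma comb_other: "\<not> (c = w \<and> r \<in> S) \<Longrightarrow> comb w S U T' (r, c) = T' (r, c)"
  by (subst comb_apply) (rule if_not_P)

lemma comb_col: "r \<in> S \<Longrightarrow> comb w S U T' (r, w) = (if r \<in> U then Beta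
       else if r = Max (S - U) then Alpha else Empty)"
  by (subst comb_apply) simp

lemma gcctD:
  assumes "gcct R lam w T"
  shows gcct_out: "\<And>p. p \<notin> gB R lam w \<Longrightarrow> T p = Empty"
    and gcct_beta: "\<And>r c c'. (r, c) \<in> gB R lam w \<Longrightarrow> T (r, c) = Beta \<Longrightarrow> c' < c \<Longrightarrow> T (r, c') = Empty"
    and gcct_alpha: "\<And>r c r'. (r, c) \<in> gB R lam w \<Longrightarrow> T (r, c) = Alpha \<Longrightarrow> r' < r \<Longrightarrow> T (r', c) = Empty"
    and gcct_full: "\<And>r c. (r, c) \<in> gB R lam w \<Longrightarrow> (\<forall>r'. r' > r \<longrightarrow> T (r', c) \<noteq> Alpha) \<Longrightarrow>
        (\<forall>c'. c' > c \<longrightarrow> T (r, c') \<noteq> Beta) \<Longrightarrow> T (r, c) \<noteq> Empty"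
  using assms unfolding gcct_def by blast+

lemma gcct_nonempty_in: "gcct R lam w T \<Longrightarrow> T p \<noteq> Empty \<Longrightarrow> p \<in> gB R lam w"
  using gcct_out by blast

lemma decomp:
  assumes g: "gcct R lam (Suc v) T" and fR: "finite R"
    and S_def: "S = {r \<in> R. Suc v \<le> lam r}"
    and U_def: "U = {r \<in> S. T (r, Suc v) = Beta}"
    and T'_def: "T' = (\<lambda>(r,c). if c \<le> v then T (r,c) else Empty)"
  shows "gcct (R - U) lam v T'" "upcl S U" "T = comb (Suc v) S U T'"
proof -
  note out = gcct_out[OF g] and bet = gcct_beta[OF g] and alp = gcct_alpha[OF g] and ful = gcct_full[OF g]
  have inB: "(r, Suc v) \<in> gB R lam (Suc v) \<longleftrightarrow> r \<in> S" for r
    by (auto simp: gB_def S_def)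
  have fS: "finite S" using fR by (simp add: S_def)
  show up: "upcl S U"
    unfolding upcl_def
  proof (intro conjI ballI impI)
    show "U \<subseteq> S" by (auto simp: U_def)
  next
    fix r r' assume r: "r \<in> U" and r': "r' \<in> S" "r < r'"
    have rB: "T (r, Suc v) = Beta" using r by (simp add: U_def)
    have "T (r', Suc v) = Beta"
    proof (cases "T (r', Suc v)")
      case Alpha
      then have "T (r, Suc v) = Empty" using alp[of r' "Suc v" r] r' inB by blast
      then show ?thesis using rB by simp
    next
      case Beta then show ?thesis .
    next
      case Empty
      have "\<not> (\<forall>r''. r'' > r' \<longrightarrow> T (r'', Suc v) \<noteq> Alpha) \<or> \<not> (\<forall>c'. c' > Suc v \<longrightarrow> T (r', c') \<noteq> Beta)"
        using ful[of r' "Suc v"] r' inB Empty by blast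
      moreover have "\<forall>c'. c' > Suc v \<longrightarrow> T (r', c') \<noteq> Beta"
        using out by (auto simp: gB_def)
      ultimately obtain r'' where "r'' > r'" "T (r'', Suc v) = Alpha" by blast
      then have "T (r, Suc v) = Empty"
        using alp[of r'' "Suc v" r] r' gcct_nonempty_in[OF g, of "(r'', Suc v)"] by auto
      then show ?thesis using rB by simp
    qed
    then show "r' \<in> U" using r' by (simp add: U_def)
  qed
  show "gcct (R - U) lam v T'"
    unfolding gcct_def
  proof (intro conjI allI impI)
    fix p assume p: "p \<notin> gB (R - U) lam v"
    obtain r c where pe: "p = (r, c)" by force
    show "T' p = Empty"
    proof (cases "c \<le> v")
      case True
      show ?thesis
      proof (cases "(r, c) \<in> gB R lam (Suc v)")
        case False
        then show ?thesis using out True by (simp add: T'_def pe)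
      next
        case inb: True
        then have "r \<in> U" using p pe True by (auto simp: gB_def)
        then have "T (r, Suc v) = Beta" "r \<in> S" by (auto simp: U_def)
        then have "T (r, c) = Empty" using bet[of r "Suc v" c] inB True by auto
        then show ?thesis using True by (simp add: T'_def pe)
      qed
    next
      case False
      then show ?thesis by (simp add: T'_def pe)
    qed
  next
    fix r c c' assume rc: "(r, c) \<in> gB (R - U) lam v" and b: "T' (r, c) = Beta" and c': "c' < c"
    have cv: "c \<le> v" using rc by (simp add: gB_def)
    have "(r, c) \<in> gB R lam (Suc v)" using rc by (auto simp: gB_def)
    moreover have "T (r, c) = Beta" using b cv by (simp add: T'_def)
    ultimately have "T (r, c') = Empty" using bet c' by blast
    then show "T' (r, c') = Empty" using cv c' by (simp add: T'_def)
  next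
    fix r c r' assume rc: "(r, c) \<in> gB (R - U) lam v" and b: "T' (r, c) = Alpha" and r': "r' < r"
    have cv: "c \<le> v" using rc by (simp add: gB_def)
    have "(r, c) \<in> gB R lam (Suc v)" using rc by (auto simp: gB_def)
    moreover have "T (r, c) = Alpha" using b cv by (simp add: T'_def)
    ultimately have "T (r', c) = Empty" using alp r' by blast
    then show "T' (r', c) = Empty" using cv by (simp add: T'_def)
  next
    fix r c assume rc: "(r, c) \<in> gB (R - U) lam v"
      and h1: "\<forall>r'>r. T' (r', c) \<noteq> Alpha" and h2: "\<forall>c'>c. T' (r, c') \<noteq> Beta"
    have cv: "c \<le> v" and rU: "r \<notin> U" using rc by (auto simp: gB_def)
    have rcB: "(r, c) \<in> gB R lam (Suc v)" using rc by (auto simp: gB_def)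
    have "\<forall>r'>r. T (r', c) \<noteq> Alpha" using h1 cv by (simp add: T'_def)
    moreover have "\<forall>c'>c. T (r, c') \<noteq> Beta"
    proof (intro allI impI)
      fix c' assume c': "c' > c"
      show "T (r, c') \<noteq> Beta"
      proof (cases "c' \<le> v")
        case True then show ?thesis using h2[rule_format, OF c'] by (simp add: T'_def)
      next
        case False
        show ?thesis
        proof (cases "c' = Suc v")
          case True
          then show ?thesis using rU out[of "(r, c')"] inB by (auto simp: U_def)
        next
          case False
          then have "(r, c') \<notin> gB R lam (Suc v)" using \<open>\<not> c' \<le> v\<close> by (auto simp: gB_def)
          then show ?thesis using out by simp
        qed
      qed
    qed
    ultimately have "T (r, c) \<noteq> Empty" using ful rcB by blast
    then show "T' (r, c) \<noteq> Empty" using cv by (simp add: T'_def)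
  qed
  show "T = comb (Suc v) S U T'"
  proof (rule ext, clarify)
    fix r c
    show "T (r, c) = comb (Suc v) S U T' (r, c)"
    proof (cases "c = Suc v \<and> r \<in> S")
      case False
      have "T (r, c) = T' (r, c)"
      proof (cases "c \<le> v")
        case True then show ?thesis by (simp add: T'_def)
      next
        case cf: False
        then have "(r, c) \<notin> gB R lam (Suc v)" using False by (auto simp: gB_def S_def)
        then show ?thesis using out cf by (simp add: T'_def)
      qed
      then show ?thesis using comb_other[OF False] by simp
    next
      case True
      then have c: "c = Suc v" and rS: "r \<in> S" by auto
      show ?thesis
      proof (cases "r \<in> U")
        case True then show ?thesis using c comb_col[OF rS] by (simp add: U_def)
      next
        case rU: False
        have ne: "S - U \<noteq> {}" using rS rU by blast
        define a where "a = Max (S - U)"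
        have a: "a \<in> S - U" unfolding a_def using Max_in[of "S - U"] ne fS by blast
        have amax: "\<And>r. r \<in> S - U \<Longrightarrow> r \<le> a" using fS a_def by simp
        have aA: "T (a, Suc v) = Alpha"
        proof -
          have "T (a, Suc v) \<noteq> Beta" using a by (simp add: U_def)
          moreover have "T (a, Suc v) \<noteq> Empty"
          proof (rule ful)
            show "(a, Suc v) \<in> gB R lam (Suc v)" using a inB by blast
            show "\<forall>r'>a. T (r', Suc v) \<noteq> Alpha"
            proof (intro allI impI notI)
              fix r' assume "a < r'" "T (r', Suc v) = Alpha"
              then have "r' \<in> S" "r' \<notin> U" using gcct_nonempty_in[OF g, of "(r', Suc v)"] inB
                by (auto simp: U_def)
              then show False using amax \<open>a < r'\<close> by force
            qed
            show "\<forall>c'>Suc v. T (a, c') \<noteq> Beta" using out by (auto simp: gB_def)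
          qed
          ultimately show ?thesis by (cases "T (a, Suc v)") auto
        qed
        show ?thesis
        proof (cases "r = a")
          case True then show ?thesis using c comb_col[OF rS] rU aA a_def by simp
        next
          case False
          then have "r < a" using amax rS rU by force
          then have "T (r, Suc v) = Empty" using alp[of a "Suc v" r] aA a inB by blast
          then show ?thesis using c comb_col[OF rS] rU False a_def by simp
        qed
      qed
    qed
  qed
qed


lemma comb_good:
  assumes fR: "finite R" and g': "gcct (R - U) lam v T'"
    and S_def: "S = {r \<in> R. Suc v \<le> lam r}" and up: "upcl S U"
    and T_def: "T = comb (Suc v) S U T'"
  shows "gcct R lam (Suc v) T"
    and "\<And>x. x \<le> Suc v \<Longrightarrow> card (betas T x) = card (betas T' x) + card U"
    and "card (alphas T) = card (alphas T') + (if card U < card S then 1 else 0)"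
proof -
  note out = gcct_out[OF g'] and bet = gcct_beta[OF g'] and alp = gcct_alpha[OF g'] and ful = gcct_full[OF g']
  have fS: "finite S" using fR by (simp add: S_def)
  have US: "U \<subseteq> S" using up by (simp add: upcl_def)
  have fU: "finite U" using US fS by (rule finite_subset)
  have T'e: "T' (r, c) = Empty" if "v < c \<or> r \<in> U \<or> r \<notin> R" for r c
    using out that by (auto simp: gB_def)
  have inB: "(r, Suc v) \<in> gB R lam (Suc v) \<longleftrightarrow> r \<in> S" for r
    by (auto simp: gB_def S_def)
  have Tcol: "T (r, Suc v) = (if r \<in> U then Beta else if r = Max (S - U) then Alpha else Empty)"
    if "r \<in> S" for r using comb_col[OF that] T_def by simp
  have Toth: "T (r, c) = T' (r, c)" if "\<not> (c = Suc v \<and> r \<in> S)" for r c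
    using comb_other[OF that] T_def by simp
  have Tne: "T (r, c) = T' (r, c)" if "c \<noteq> Suc v" for r c using Toth that by blast
  have B'B: "gB (R - U) lam v \<subseteq> gB R lam (Suc v)" by (auto simp: gB_def)
  define a where "a = Max (S - U)"
  have amax: "\<And>r. r \<in> S - U \<Longrightarrow> r \<le> a" using fS a_def by simp
  have aS: "S - U \<noteq> {} \<Longrightarrow> a \<in> S - U" unfolding a_def using Max_in[of "S - U"] fS by blast
  show g: "gcct R lam (Suc v) T"
    unfolding gcct_def
  proof (intro conjI allI impI)
    fix p assume p: "p \<notin> gB R lam (Suc v)"
    obtain r c where pe: "p = (r, c)" by force
    have "\<not> (c = Suc v \<and> r \<in> S)" using p pe inB by blast
    moreover have "T' (r, c) = Empty" using out B'B p pe by blast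
    ultimately show "T p = Empty" using Toth pe by simp
  next
    fix r c c' assume rc: "(r, c) \<in> gB R lam (Suc v)" and b: "T (r, c) = Beta" and c': "c' < c"
    show "T (r, c') = Empty"
    proof (cases "c = Suc v \<and> r \<in> S")
      case True
      then have "r \<in> U" using b Tcol by (auto split: if_splits)
      then show ?thesis using Tne[of c' r] c' T'e True by auto
    next
      case False
      then have "T' (r, c) = Beta" using b Toth by simp
      then have rc': "(r, c) \<in> gB (R - U) lam v" using out by force
      then have "c \<le> v" by (simp add: gB_def)
      then show ?thesis using bet[OF rc' \<open>T' (r, c) = Beta\<close> c'] Tne[of c' r] c' by simp
    qed
  next
    fix r c r' assume rc: "(r, c) \<in> gB R lam (Suc v)" and b: "T (r, c) = Alpha" and r': "r' < r"
    show "T (r', c) = Empty"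
    proof (cases "c = Suc v \<and> r \<in> S")
      case True
      then have rU: "r \<notin> U" and ra: "r = a" using b Tcol a_def by (auto split: if_splits)
      show ?thesis
      proof (cases "r' \<in> S")
        case True
        have "r' \<notin> U" using up r' True rU \<open>c = Suc v \<and> r \<in> S\<close> unfolding upcl_def by blast
        moreover have "r' \<noteq> a" using r' ra by simp
        ultimately show ?thesis using Tcol[OF True] \<open>c = Suc v \<and> r \<in> S\<close> a_def by simp
      next
        case False
        then show ?thesis using Toth T'e \<open>c = Suc v \<and> r \<in> S\<close> by auto
      qed
    next
      case False
      then have "T' (r, c) = Alpha" using b Toth by simp
      then have rc': "(r, c) \<in> gB (R - U) lam v" using out by force
      then have "c \<le> v" by (simp add: gB_def)
      then show ?thesis using alp[OF rc' \<open>T' (r, c) = Alpha\<close> r'] Tne[of c r'] by simp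
    qed
  next
    fix r c assume rc: "(r, c) \<in> gB R lam (Suc v)"
      and h1: "\<forall>r'>r. T (r', c) \<noteq> Alpha" and h2: "\<forall>c'>c. T (r, c') \<noteq> Beta"
    show "T (r, c) \<noteq> Empty"
    proof (cases "c = Suc v \<and> r \<in> S")
      case True
      then have c: "c = Suc v" and rS: "r \<in> S" by auto
      show ?thesis
      proof (cases "r \<in> U \<or> r = a")
        case True then show ?thesis using Tcol[OF rS] c a_def by auto
      next
        case False
        then have "r \<in> S - U" using rS by blast
        then have ra: "r < a" using amax False by force
        have "a \<in> S - U" using aS \<open>r \<in> S - U\<close> by blast
        then have "T (a, c) = Alpha" using Tcol[of a] c a_def by simp
        then show ?thesis using h1 ra by blast
      qed
    next
      case False
      have cle: "c \<le> Suc v" using rc by (simp add: gB_def)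
      have cv: "c \<le> v"
      proof (rule ccontr)
        assume "\<not> c \<le> v"
        then have "c = Suc v" using cle by simp
        then have "r \<in> S" using rc inB by simp
        then show False using False \<open>c = Suc v\<close> by simp
      qed
      have rU: "r \<notin> U"
      proof
        assume "r \<in> U"
        then have "T (r, Suc v) = Beta" using Tcol US by auto
        then show False using h2 cv by auto
      qed
      have rc': "(r, c) \<in> gB (R - U) lam v" using rc rU cv by (auto simp: gB_def)
      have "T' (r, c) \<noteq> Empty"
      proof (rule ful[OF rc'])
        show "\<forall>r'>r. T' (r', c) \<noteq> Alpha" using h1 Tne cv by auto
        show "\<forall>c'>c. T' (r, c') \<noteq> Beta"
        proof (intro allI impI)
          fix c' assume c': "c' > c"
          show "T' (r, c') \<noteq> Beta"
          proof (cases "c' \<le> v")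
            case True then show ?thesis using h2 c' Tne[of c' r] by auto
          next
            case False then show ?thesis using T'e by simp
          qed
        qed
      qed
      then show ?thesis using Toth[OF False] by simp
    qed
  qed
  have fbet: "finite (betas T' x)" for x
  proof (rule finite_subset[OF _ finite_gB[of "R - U" lam v]])
    show "betas T' x \<subseteq> gB (R - U) lam v" using out by (force simp: betas_def)
    show "finite (R - U)" using fR by simp
  qed
  show "card (betas T x) = card (betas T' x) + card U" if x: "x \<le> Suc v" for x
  proof -
    have "betas T x = betas T' x \<union> (\<lambda>r. (r, Suc v)) ` U"
    proof (rule set_eqI)
      fix p :: "nat \<times> nat"
      obtain r c where pe: "p = (r, c)" by force
      show "p \<in> betas T x \<longleftrightarrow> p \<in> betas T' x \<union> (\<lambda>r. (r, Suc v)) ` U"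
      proof (cases "c = Suc v \<and> r \<in> S")
        case True
        then show ?thesis using Tcol[of r] T'e[of "Suc v" r] x pe by (auto simp: betas_def)
      next
        case False
        then show ?thesis using Toth[OF False] pe US by (auto simp: betas_def)
      qed
    qed
    moreover have "betas T' x \<inter> (\<lambda>r. (r, Suc v)) ` U = {}"
      using T'e by (auto simp: betas_def)
    ultimately have "card (betas T x) = card (betas T' x) + card ((\<lambda>r. (r, Suc v)) ` U)"
      using fbet fU by (simp add: card_Un_disjoint)
    moreover have "card ((\<lambda>r. (r, Suc v)) ` U) = card U"
      by (rule card_image) (auto simp: inj_on_def)
    ultimately show ?thesis by simp
  qed
  have falp: "finite (alphas T')"
  proof (rule finite_subset[OF _ finite_gB[of "R - U" lam v]])
    show "alphas T' \<subseteq> gB (R - U) lam v" using out by (force simp: alphas_def)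
    show "finite (R - U)" using fR by simp
  qed
  show "card (alphas T) = card (alphas T') + (if card U < card S then 1 else 0)"
  proof -
    have eq: "alphas T = alphas T' \<union> (if S - U \<noteq> {} then {(a, Suc v)} else {})"
    proof (rule set_eqI)
      fix p :: "nat \<times> nat"
      obtain r c where pe: "p = (r, c)" by force
      show "p \<in> alphas T \<longleftrightarrow> p \<in> alphas T' \<union> (if S - U \<noteq> {} then {(a, Suc v)} else {})"
      proof (cases "c = Suc v \<and> r \<in> S")
        case True
        then show ?thesis using Tcol[of r] T'e[of "Suc v" r] pe aS a_def by (auto simp: alphas_def)
      next
        case False
        moreover have "S - U \<noteq> {} \<Longrightarrow> (r, c) \<noteq> (a, Suc v)" using False aS by auto
        ultimately show ?thesis using Toth[OF False] pe by (auto simp: alphas_def)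
      qed
    qed
    have nin: "(a, Suc v) \<notin> alphas T'" using T'e by (simp add: alphas_def)
    have "card U < card S \<longleftrightarrow> S - U \<noteq> {}"
      using US fS by (metis Diff_eq_empty_iff psubset_card_mono subset_antisym
          card_mono not_less order_le_less)
    then show ?thesis using eq nin falp by (auto simp: card_insert_if)
  qed
qed


lemma ell_split:
  assumes "finite R" "U \<subseteq> {r \<in> R. x \<le> lam r}"
  shows "ell R lam x = ell (R - U) lam x + card U"
proof -
  have "{r \<in> R. x \<le> lam r} = {r \<in> R - U. x \<le> lam r} \<union> U" using assms(2) by blast
  moreover have "finite U" using assms(1) by (rule finite_subset[OF assms(2)[THEN subset_trans], rotated]) auto
  moreover have "finite {r \<in> R - U. x \<le> lam r}" using assms(1) by simp
  moreover have "{r \<in> R - U. x \<le> lam r} \<inter> U = {}" by blast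
  ultimately show ?thesis unfolding ell_def by (metis card_Un_disjoint)
qed

lemma gB_zero: "gB R lam 0 = {}" by (auto simp: gB_def)

lemma gcct_betas_high:
  assumes g: "gcct R lam v T" and vx: "v < x" shows "betas T x = {}"
proof (rule equals0I)
  fix p assume p: "p \<in> betas T x"
  then have "T p \<noteq> Empty" "x \<le> snd p" by (auto simp: betas_def)
  then have "p \<in> gB R lam v" using gcct_nonempty_in[OF g] by blast
  then show False using \<open>x \<le> snd p\<close> vx by (cases p) (auto simp: gB_def)
qed

lemma gcct_zero: "gcct R lam 0 T \<Longrightarrow> T = (\<lambda>_. Empty)"
  using gcct_out[of R lam 0 T] by (auto simp: gB_zero)

lemma gcct_zero_ex: "gcct R lam 0 (\<lambda>_. Empty)"
  by (simp add: gcct_def gB_def)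

lemma L_step:
  assumes fR: "finite R" and g: "gcct R lam (Suc v) T"
  obtains S U T' where "S = {r \<in> R. Suc v \<le> lam r}" "upcl S U" "gcct (R - U) lam v T'"
    "T = comb (Suc v) S U T'"
    "\<And>x. 1 \<le> x \<Longrightarrow> x \<le> v \<Longrightarrow> Eof (Suc v) T x = Eof v T' x + card U"
    "Eof (Suc v) T (Suc v) = card U"
    "card (alphas T) = card (alphas T') + (if card U < card S then 1 else 0)"
    "\<And>x. x \<le> Suc v \<Longrightarrow> ell R lam x = ell (R - U) lam x + card U"
    "card U \<le> ell R lam (Suc v)" "card S = ell R lam (Suc v)"
proof -
  define S where "S = {r \<in> R. Suc v \<le> lam r}"
  define U where "U = {r \<in> S. T (r, Suc v) = Beta}"
  define T' where "T' = (\<lambda>(r,c). if c \<le> v then T (r,c) else Empty)"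
  have d: "gcct (R - U) lam v T'" "upcl S U" "T = comb (Suc v) S U T'"
    using decomp[OF g fR S_def U_def T'_def] by blast+
  note cg = comb_good[OF fR d(1) S_def d(2) d(3)]
  have US: "U \<subseteq> S" using d(2) by (simp add: upcl_def)
  have fS: "finite S" using fR S_def by simp
  have e1: "Eof (Suc v) T x = Eof v T' x + card U" if "1 \<le> x" "x \<le> v" for x
    using cg(2)[of x] that by (simp add: Eof_def)
  have e2: "Eof (Suc v) T (Suc v) = card U"
    using cg(2)[of "Suc v"] gcct_betas_high[OF d(1), of "Suc v"] by (simp add: Eof_def)
  have el: "ell R lam x = ell (R - U) lam x + card U" if "x \<le> Suc v" for x
    proof (rule ell_split[OF fR])
    show "U \<subseteq> {r \<in> R. x \<le> lam r}" using US that unfolding S_def by auto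
  qed
  have cS: "card S = ell R lam (Suc v)" by (simp add: ell_def S_def)
  have cU: "card U \<le> ell R lam (Suc v)" using card_mono[OF fS US] cS by simp
  show thesis using that[OF S_def d(2) d(1) d(3) e1 e2 cg(3) el cU cS] .
qed

lemma L1:
  "finite R \<Longrightarrow> gcct R lam w T \<Longrightarrow> Eof w T \<in> VV R lam w \<and>
     card (alphas T) = card {x \<in> {1..w}. Eof w T x < ell R lam x}"
proof (induction w arbitrary: R T)
  case 0
  then have "T = (\<lambda>_. Empty)" using gcct_zero by blast
  then show ?case by (simp add: VV_def Eof_def alphas_def)
next
  case (Suc v)
  obtain S U T' where st: "S = {r \<in> R. Suc v \<le> lam r}" "upcl S U" "gcct (R - U) lam v T'"
    "T = comb (Suc v) S U T'"
    "\<And>x. 1 \<le> x \<Longrightarrow> x \<le> v \<Longrightarrow> Eof (Suc v) T x = Eof v T' x + card U"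
    "Eof (Suc v) T (Suc v) = card U"
    "card (alphas T) = card (alphas T') + (if card U < card S then 1 else 0)"
    "\<And>x. x \<le> Suc v \<Longrightarrow> ell R lam x = ell (R - U) lam x + card U"
    "card U \<le> ell R lam (Suc v)" "card S = ell R lam (Suc v)"
    using L_step[OF Suc.prems] by blast
  have fR': "finite (R - U)" using Suc.prems by simp
  have IH: "Eof v T' \<in> VV (R - U) lam v"
    "card (alphas T') = card {x \<in> {1..v}. Eof v T' x < ell (R - U) lam x}"
    using Suc.IH[OF fR' st(3)] by blast+
  define E where "E = Eof (Suc v) T"
  define E' where "E' = Eof v T'"
  have E1: "E x = E' x + card U" if "1 \<le> x" "x \<le> v" for x using st(5) that E_def E'_def by simp
  have E2: "E (Suc v) = card U" using st(6) E_def by simp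
  have E0: "E x = 0" if "x = 0 \<or> Suc v < x" for x using that by (auto simp: E_def Eof_def)
  have V': "\<And>x y. 1 \<le> x \<Longrightarrow> x \<le> y \<Longrightarrow> y \<le> v \<Longrightarrow> E' y \<le> E' x"
    "\<And>x. 1 \<le> x \<Longrightarrow> x \<le> v \<Longrightarrow> E' x \<le> ell (R - U) lam x"
    using IH(1) unfolding VV_def E'_def by blast+
  have "E \<in> VV R lam (Suc v)"
    unfolding VV_def
  proof (intro CollectI conjI allI impI)
    fix x assume "x = 0 \<or> Suc v < x" then show "E x = 0" by (rule E0)
  next
    fix x y assume h: "1 \<le> x" "x \<le> y" "y \<le> Suc v"
    show "E y \<le> E x"
    proof (cases "y \<le> v")
      case True then show ?thesis using E1 V'(1) h by force
    next
      case False
      then have "y = Suc v" using h by simp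
      show ?thesis
      proof (cases "x \<le> v")
        case True then show ?thesis using E1[of x] E2 h \<open>y = Suc v\<close> by simp
      next
        case False then have "x = Suc v" using h by simp
        then show ?thesis using \<open>y = Suc v\<close> by simp
      qed
    qed
  next
    fix x assume h: "1 \<le> x" "x \<le> Suc v"
    show "E x \<le> ell R lam x"
    proof (cases "x \<le> v")
      case True then show ?thesis using E1 V'(2) h st(8) by force
    next
      case False
      then have "x = Suc v" using h by simp
      then show ?thesis using E2 st(9) by simp
    qed
  qed
  moreover have "{x \<in> {1..Suc v}. E x < ell R lam x} =
      {x \<in> {1..v}. E' x < ell (R - U) lam x} \<union> (if card U < card S then {Suc v} else {})"
  proof (rule set_eqI)
    fix x
    show "x \<in> {x \<in> {1..Suc v}. E x < ell R lam x} \<longleftrightarrow>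
      x \<in> {x \<in> {1..v}. E' x < ell (R - U) lam x} \<union> (if card U < card S then {Suc v} else {})"
    proof (cases "x \<le> v")
      case True then show ?thesis using E1[of x] st(8)[of x] by auto
    next
      case False
      show ?thesis
      proof (cases "x = Suc v")
        case True then show ?thesis using E2 st(10) False by auto
      next
        case False then show ?thesis using \<open>\<not> x \<le> v\<close> by auto
      qed
    qed
  qed
  ultimately show ?case using st(7) IH(2) E_def E'_def by (simp add: card_insert_if)
qed


lemma L2:
  "finite R \<Longrightarrow> gcct R lam w T1 \<Longrightarrow> gcct R lam w T2 \<Longrightarrow> Eof w T1 = Eof w T2 \<Longrightarrow> T1 = T2"
proof (induction w arbitrary: R T1 T2)
  case 0
  then show ?case using gcct_zero[of R lam T1] gcct_zero[of R lam T2] by simp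
next
  case (Suc v)
  obtain S1 U1 T1' where s1: "S1 = {r \<in> R. Suc v \<le> lam r}" "upcl S1 U1" "gcct (R - U1) lam v T1'"
    "T1 = comb (Suc v) S1 U1 T1'"
    "\<And>x. 1 \<le> x \<Longrightarrow> x \<le> v \<Longrightarrow> Eof (Suc v) T1 x = Eof v T1' x + card U1"
    "Eof (Suc v) T1 (Suc v) = card U1"
    "card (alphas T1) = card (alphas T1') + (if card U1 < card S1 then 1 else 0)"
    "\<And>x. x \<le> Suc v \<Longrightarrow> ell R lam x = ell (R - U1) lam x + card U1"
    "card U1 \<le> ell R lam (Suc v)" "card S1 = ell R lam (Suc v)"
    using L_step[OF Suc.prems(1,2)] by blast
  obtain S2 U2 T2' where s2: "S2 = {r \<in> R. Suc v \<le> lam r}" "upcl S2 U2" "gcct (R - U2) lam v T2'"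
    "T2 = comb (Suc v) S2 U2 T2'"
    "\<And>x. 1 \<le> x \<Longrightarrow> x \<le> v \<Longrightarrow> Eof (Suc v) T2 x = Eof v T2' x + card U2"
    "Eof (Suc v) T2 (Suc v) = card U2"
    "card (alphas T2) = card (alphas T2') + (if card U2 < card S2 then 1 else 0)"
    "\<And>x. x \<le> Suc v \<Longrightarrow> ell R lam x = ell (R - U2) lam x + card U2"
    "card U2 \<le> ell R lam (Suc v)" "card S2 = ell R lam (Suc v)"
    using L_step[OF Suc.prems(1,3)] by blast
  have SS: "S2 = S1" using s1(1) s2(1) by simp
  have fS: "finite S1" using s1(1) Suc.prems(1) by simp
  have "card U1 = card U2" using s1(6) s2(6) Suc.prems(4) by simp
  then have UU: "U1 = U2" using upcl_unique[OF fS s1(2)] s2(2) SS by simp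
  have "Eof v T1' = Eof v T2'"
  proof (rule ext)
    fix x
    show "Eof v T1' x = Eof v T2' x"
    proof (cases "1 \<le> x \<and> x \<le> v")
      case True
      then show ?thesis using s1(5)[of x] s2(5)[of x] Suc.prems(4) UU by simp
    next
      case False then show ?thesis by (auto simp: Eof_def)
    qed
  qed
  then have "T1' = T2'" using Suc.IH[of "R - U1" T1' T2'] Suc.prems(1) s1(3) s2(3) UU by simp
  then show ?case using s1(4) s2(4) SS UU by simp
qed

lemma L3:
  "finite R \<Longrightarrow> E \<in> VV R lam w \<Longrightarrow> \<exists>T. gcct R lam w T \<and> Eof w T = E"
proof (induction w arbitrary: R E)
  case 0
  have "E = (\<lambda>_. 0)" using 0 by (auto simp: VV_def)
  then show ?case by (intro exI[of _ "\<lambda>_. Empty"]) (auto simp: Eof_def gcct_zero_ex)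
next
  case (Suc v)
  note fR = Suc.prems(1)
  note VVd = Suc.prems(2)[unfolded VV_def mem_Collect_eq]
  note E0 = VVd[THEN conjunct1, rule_format]
  note Ea = VVd[THEN conjunct2, THEN conjunct1, rule_format]
  note El = VVd[THEN conjunct2, THEN conjunct2, rule_format]
  define S where "S = {r \<in> R. Suc v \<le> lam r}"
  define j where "j = E (Suc v)"
  have fS: "finite S" using fR S_def by simp
  have "j \<le> card S" using El[of "Suc v"] by (simp add: j_def S_def ell_def)
  then obtain U where U: "upcl S U" "card U = j" using upcl_exists[OF fS] by blast
  have US: "U \<subseteq> S" using U(1) by (simp add: upcl_def)
  have el: "ell R lam x = ell (R - U) lam x + card U" if "x \<le> Suc v" for x
  proof (rule ell_split[OF fR])
    show "U \<subseteq> {r \<in> R. x \<le> lam r}" using US that unfolding S_def by auto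
  qed
  define E' where "E' = (\<lambda>x. if 1 \<le> x \<and> x \<le> v then E x - j else 0)"
  have jle: "j \<le> E x" if "1 \<le> x" "x \<le> Suc v" for x using Ea[of x "Suc v"] that j_def by simp
  have "E' \<in> VV (R - U) lam v"
    unfolding VV_def
  proof (intro CollectI conjI allI impI)
    fix x assume "x = 0 \<or> v < x" then show "E' x = 0" by (auto simp: E'_def)
  next
    fix x y assume h: "1 \<le> x" "x \<le> y" "y \<le> v"
    have "E y \<le> E x" using Ea[of x y] h by simp
    then show "E' y \<le> E' x" using h by (simp add: E'_def diff_le_mono)
  next
    fix x assume h: "1 \<le> x" "x \<le> v"
    have "E x \<le> ell R lam x" using El[of x] h by simp
    moreover have "ell R lam x = ell (R - U) lam x + j" using el[of x] h U(2) by simp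
    ultimately show "E' x \<le> ell (R - U) lam x" using h by (simp add: E'_def)
  qed
  then obtain T' where T': "gcct (R - U) lam v T'" "Eof v T' = E'"
    using Suc.IH[of "R - U" E'] fR by auto
  define T where "T = comb (Suc v) S U T'"
  note cg = comb_good[OF fR T'(1) S_def U(1) T_def]
  have "Eof (Suc v) T = E"
  proof (rule ext)
    fix x
    show "Eof (Suc v) T x = E x"
    proof (cases "1 \<le> x \<and> x \<le> v")
      case True
      have "Eof v T' x = card (betas T' x)" using True by (simp add: Eof_def)
      then have "card (betas T' x) = E x - j" using T'(2) True by (simp add: E'_def)
      then show ?thesis using cg(2)[of x] True jle[of x] U(2) by (simp add: Eof_def)
    next
      case False
      show ?thesis
      proof (cases "x = Suc v")
        case True
        then show ?thesis using cg(2)[of x] gcct_betas_high[OF T'(1), of x] U(2) j_def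
          by (simp add: Eof_def)
      next
        case False
        then have "x = 0 \<or> Suc v < x" using \<open>\<not> (1 \<le> x \<and> x \<le> v)\<close> by auto
        then show ?thesis using E0[of x] by (auto simp: Eof_def)
      qed
    qed
  qed
  then show ?case using cg(1) by blast
qed



lemma downset_interval:
  "A \<subseteq> {1..k} \<Longrightarrow> (\<forall>j\<in>A. \<forall>j'. 1 \<le> j' \<longrightarrow> j' \<le> j \<longrightarrow> j' \<in> A) \<Longrightarrow> A = {1..card A}"
proof (induction k arbitrary: A)
  case 0
  then show ?case by auto
next
  case (Suc k)
  show ?case
  proof (cases "Suc k \<in> A")
    case True
    then have "A = {1..Suc k}" using Suc.prems by fastforce
    then show ?thesis by simp
  next
    case False
    then have "A \<subseteq> {1..k}" using Suc.prems(1) by (auto simp: le_Suc_eq)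
    then show ?thesis using Suc.IH Suc.prems(2) by blast
  qed
qed

definition antit :: "nat \<Rightarrow> (nat \<Rightarrow> nat) \<Rightarrow> bool" where
  "antit k f \<longleftrightarrow> (\<forall>i j. 1 \<le> i \<longrightarrow> i \<le> j \<longrightarrow> j \<le> k \<longrightarrow> f j \<le> f i)"

lemma anti_iff:
  assumes a: "antit k f" and j: "1 \<le> j" "j \<le> k"
  shows "t \<le> f j \<longleftrightarrow> j \<le> card {i \<in> {1..k}. t \<le> f i}"
proof -
  define A where "A = {i \<in> {1..k}. t \<le> f i}"
  have "A = {1..card A}"
  proof (rule downset_interval[of A k])
    show "A \<subseteq> {1..k}" by (auto simp: A_def)
    show "\<forall>j\<in>A. \<forall>j'. 1 \<le> j' \<longrightarrow> j' \<le> j \<longrightarrow> j' \<in> A"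
      using a unfolding A_def antit_def by (auto intro: order_trans)
  qed
  then have "j \<in> A \<longleftrightarrow> j \<in> {1..card A}" by simp
  then show ?thesis using j by (simp add: A_def)
qed

lemma card_le_k: "card {i \<in> {1..k}. P i} \<le> k"
  by (rule order_trans[OF card_mono[of "{1..k}"]]) auto

lemma VVD0: "E \<in> VV R lam w \<Longrightarrow> x = 0 \<or> w < x \<Longrightarrow> E x = 0"
  unfolding VV_def mem_Collect_eq by (elim conjE) (erule allE, erule mp)
lemma VVDa: "E \<in> VV R lam w \<Longrightarrow> antit w E"
  unfolding VV_def antit_def mem_Collect_eq by (elim conjE)
lemma VVDl: "E \<in> VV R lam w \<Longrightarrow> 1 \<le> x \<Longrightarrow> x \<le> w \<Longrightarrow> E x \<le> ell R lam x"
  unfolding VV_def mem_Collect_eq by (elim conjE) (drule spec[of _ x], simp)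
lemma pD0: "is_cpath k lam C \<Longrightarrow> i < 1 \<or> k < i \<Longrightarrow> C i = 0"
  unfolding is_cpath_def by (elim conjE) (erule allE, erule mp)
lemma pDa: "is_cpath k lam C \<Longrightarrow> antit k C"
  unfolding is_cpath_def antit_def by (elim conjE)
lemma pDl: "is_cpath k lam C \<Longrightarrow> 1 \<le> i \<Longrightarrow> i \<le> k \<Longrightarrow> C i \<le> lam i"
  unfolding is_cpath_def by (elim conjE) (erule allE[of _ i], erule mp, simp)

definition conjC :: "nat \<Rightarrow> nat \<Rightarrow> (nat \<Rightarrow> nat) \<Rightarrow> nat \<Rightarrow> nat" where
  "conjC k m E i = (if 1 \<le> i \<and> i \<le> k then card {x \<in> {1..m}. i \<le> E x} else 0)"

definition conjE :: "nat \<Rightarrow> nat \<Rightarrow> (nat \<Rightarrow> nat) \<Rightarrow> nat \<Rightarrow> nat" where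
  "conjE k m C x = (if 1 \<le> x \<and> x \<le> m then card {i \<in> {1..k}. x \<le> C i} else 0)"

lemma card_interval_eq: "A = {1..n} \<Longrightarrow> card A = n" by simp

lemma conj_bij:
  assumes lamA: "antit k lam" and lamm: "\<And>r. 1 \<le> r \<Longrightarrow> r \<le> k \<Longrightarrow> lam r \<le> m"
  shows "bij_betw (conjC k m) (VV {1..k} lam m) {C. is_cpath k lam C}"
    and "\<And>E. E \<in> VV {1..k} lam m \<Longrightarrow> conjE k m (conjC k m E) = E"
proof -
  have ellk: "ell {1..k} lam x = card {i \<in> {1..k}. x \<le> lam i}" for x by (simp add: ell_def)
  have inv1: "conjE k m (conjC k m E) = E" if E: "E \<in> VV {1..k} lam m" for E
  proof (rule ext)
    fix x
    show "conjE k m (conjC k m E) x = E x"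
    proof (cases "1 \<le> x \<and> x \<le> m")
      case xr: True
      have "{i \<in> {1..k}. x \<le> conjC k m E i} = {i \<in> {1..k}. i \<le> E x}"
      proof (rule set_eqI)
        fix i
        show "i \<in> {i \<in> {1..k}. x \<le> conjC k m E i} \<longleftrightarrow> i \<in> {i \<in> {1..k}. i \<le> E x}"
        proof (cases "1 \<le> i \<and> i \<le> k")
          case ik: True
          have "conjC k m E i = card {y \<in> {1..m}. i \<le> E y}" using ik by (simp add: conjC_def)
          moreover have "i \<le> E x \<longleftrightarrow> x \<le> card {y \<in> {1..m}. i \<le> E y}"
            using anti_iff[OF VVDa[OF E], of x i] xr by simp
          ultimately show ?thesis using ik by simp
        next
          case False then show ?thesis by (simp only: mem_Collect_eq atLeastAtMost_iff) blast
        qed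
      qed
      also have "\<dots> = {1..E x}"
      proof -
        have "E x \<le> ell {1..k} lam x" using VVDl[OF E, of x] xr by simp
        also have "\<dots> \<le> k" unfolding ellk by (rule card_le_k)
        finally have "E x \<le> k" .
        then show ?thesis by auto
      qed
      finally show ?thesis using xr by (simp add: conjE_def)
    next
      case False
      then have "x = 0 \<or> m < x" by auto
      then have "E x = 0" by (rule VVD0[OF E])
      moreover have "conjE k m (conjC k m E) x = 0" using False unfolding conjE_def by (rule if_not_P)
      ultimately show ?thesis by simp
    qed
  qed
  then show "\<And>E. E \<in> VV {1..k} lam m \<Longrightarrow> conjE k m (conjC k m E) = E" by blast
  have inv2: "conjC k m (conjE k m C) = C" if C: "is_cpath k lam C" for C
  proof (rule ext)
    fix i
    show "conjC k m (conjE k m C) i = C i"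
    proof (cases "1 \<le> i \<and> i \<le> k")
      case ir: True
      have "{x \<in> {1..m}. i \<le> conjE k m C x} = {x \<in> {1..m}. x \<le> C i}"
      proof (rule set_eqI)
        fix x
        show "x \<in> {x \<in> {1..m}. i \<le> conjE k m C x} \<longleftrightarrow> x \<in> {x \<in> {1..m}. x \<le> C i}"
        proof (cases "1 \<le> x \<and> x \<le> m")
          case xm: True
          have "conjE k m C x = card {j \<in> {1..k}. x \<le> C j}" using xm by (simp add: conjE_def)
          moreover have "x \<le> C i \<longleftrightarrow> i \<le> card {j \<in> {1..k}. x \<le> C j}"
            using anti_iff[OF pDa[OF C], of i x] ir by simp
          ultimately show ?thesis using xm by simp
        next
          case False then show ?thesis by (simp only: mem_Collect_eq atLeastAtMost_iff) blast
        qed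
      qed
      also have "\<dots> = {1..C i}"
      proof -
        have "C i \<le> lam i" using pDl[OF C, of i] ir by simp
        also have "\<dots> \<le> m" using ir lamm by blast
        finally have "C i \<le> m" .
        then show ?thesis by auto
      qed
      finally show ?thesis using ir by (simp add: conjC_def)
    next
      case False
      then have "i < 1 \<or> k < i" by auto
      then have "C i = 0" by (rule pD0[OF C])
      moreover have "conjC k m (conjE k m C) i = 0" using False unfolding conjC_def by (rule if_not_P)
      ultimately show ?thesis by simp
    qed
  qed
  have map1: "is_cpath k lam (conjC k m E)" if E: "E \<in> VV {1..k} lam m" for E
  proof -
    have "conjC k m E i \<le> lam i" if i: "1 \<le> i" "i \<le> k" for i
    proof -
      have "{x \<in> {1..m}. i \<le> E x} \<subseteq> {1..lam i}"
      proof
        fix x assume x: "x \<in> {x \<in> {1..m}. i \<le> E x}"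
        then have x1: "1 \<le> x" "x \<le> m" "i \<le> E x" by auto
        then have "E x \<le> ell {1..k} lam x" using VVDl[OF E, of x] by simp
        then have "i \<le> ell {1..k} lam x" using x1(3) by (rule order_trans[rotated])
        then have "x \<le> lam i" using anti_iff[OF lamA i, of x] ellk by simp
        then show "x \<in> {1..lam i}" using x by simp
      qed
      then have "card {x \<in> {1..m}. i \<le> E x} \<le> card {1..lam i}"
        by (intro card_mono) auto
      then have "card {x \<in> {1..m}. i \<le> E x} \<le> lam i" by simp
      then show ?thesis using i by (simp add: conjC_def)
    qed
    moreover have "conjC k m E j \<le> conjC k m E i" if "1 \<le> i" "i \<le> j" "j \<le> k" for i j
    proof -
      have "{x \<in> {1..m}. j \<le> E x} \<subseteq> {x \<in> {1..m}. i \<le> E x}" using that by auto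
      then have "card {x \<in> {1..m}. j \<le> E x} \<le> card {x \<in> {1..m}. i \<le> E x}"
        by (rule card_mono[rotated]) simp
      then show ?thesis using that by (simp add: conjC_def)
    qed
    ultimately show ?thesis unfolding is_cpath_def by (auto simp: conjC_def)
  qed
  have map2: "conjE k m C \<in> VV {1..k} lam m" if C: "is_cpath k lam C" for C
  proof -
    have "conjE k m C x \<le> ell {1..k} lam x" if "1 \<le> x" "x \<le> m" for x
    proof -
      have "{i \<in> {1..k}. x \<le> C i} \<subseteq> {i \<in> {1..k}. x \<le> lam i}"
        using pDl[OF C] by (auto intro: order_trans)
      then have "card {i \<in> {1..k}. x \<le> C i} \<le> card {i \<in> {1..k}. x \<le> lam i}"
        by (rule card_mono[rotated]) simp
      then show ?thesis using that ellk by (simp add: conjE_def)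
    qed
    moreover have "conjE k m C y \<le> conjE k m C x" if "1 \<le> x" "x \<le> y" "y \<le> m" for x y
    proof -
      have "{i \<in> {1..k}. y \<le> C i} \<subseteq> {i \<in> {1..k}. x \<le> C i}" using that by auto
      then have "card {i \<in> {1..k}. y \<le> C i} \<le> card {i \<in> {1..k}. x \<le> C i}"
        by (rule card_mono[rotated]) simp
      then show ?thesis using that by (simp add: conjE_def)
    qed
    ultimately show ?thesis unfolding VV_def by (auto simp: conjE_def)
  qed
  show "bij_betw (conjC k m) (VV {1..k} lam m) {C. is_cpath k lam C}"
  proof (rule bij_betw_byWitness[where f' = "conjE k m"])
    show "conjC k m ` VV {1..k} lam m \<subseteq> {C. is_cpath k lam C}" using map1 by blast
    show "conjE k m ` {C. is_cpath k lam C} \<subseteq> VV {1..k} lam m" using map2 by blast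
    show "\<forall>E\<in>VV {1..k} lam m. conjE k m (conjC k m E) = E" using inv1 by blast
    show "\<forall>C\<in>{C. is_cpath k lam C}. conjC k m (conjE k m C) = C" using inv2 by blast
  qed
qed



lemma boxes_eq: "(\<And>r. 1 \<le> r \<Longrightarrow> r \<le> k \<Longrightarrow> lam r \<le> m) \<Longrightarrow> boxes k lam = gB {1..k} lam m"
  unfolding boxes_def gB_def by (auto intro: order_trans)

lemma cct_iff:
  assumes lm: "\<And>r. 1 \<le> r \<Longrightarrow> r \<le> k \<Longrightarrow> lam r \<le> m"
  shows "is_cct k lam T \<longleftrightarrow> gcct {1..k} lam m T"
proof -
  have be: "boxes k lam = gB {1..k} lam m" using boxes_eq[of k lam m] lm by blast
  show ?thesis
  proof
    assume h: "is_cct k lam T"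
    have h': "(\<forall>p. p \<notin> gB {1..k} lam m \<longrightarrow> T p = Empty) \<and>
     (\<forall>r c. (r, c) \<in> gB {1..k} lam m \<longrightarrow> T (r, c) = Beta \<longrightarrow>
        (\<forall>c'. 1 \<le> c' \<and> c' < c \<longrightarrow> T (r, c') = Empty)) \<and>
     (\<forall>r c. (r, c) \<in> gB {1..k} lam m \<longrightarrow> T (r, c) = Alpha \<longrightarrow>
        (\<forall>r'. 1 \<le> r' \<and> r' < r \<longrightarrow> T (r', c) = Empty)) \<and>
     (\<forall>r c. (r, c) \<in> gB {1..k} lam m \<longrightarrow>
        (\<forall>r'. r' > r \<and> (r', c) \<in> gB {1..k} lam m \<longrightarrow> T (r', c) \<noteq> Alpha) \<longrightarrow>
        (\<forall>c'. c' > c \<and> (r, c') \<in> gB {1..k} lam m \<longrightarrow> T (r, c') \<noteq> Beta) \<longrightarrow>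
        T (r, c) \<noteq> Empty)" using h unfolding is_cct_def be .
    have o: "\<And>p. p \<notin> gB {1..k} lam m \<Longrightarrow> T p = Empty" using h'[THEN conjunct1] by blast
    have b: "\<And>r c c'. (r, c) \<in> gB {1..k} lam m \<Longrightarrow> T (r, c) = Beta \<Longrightarrow> 1 \<le> c' \<Longrightarrow> c' < c \<Longrightarrow> T (r, c') = Empty"
      using h'[THEN conjunct2, THEN conjunct1] by simp
    have a: "\<And>r c r'. (r, c) \<in> gB {1..k} lam m \<Longrightarrow> T (r, c) = Alpha \<Longrightarrow> 1 \<le> r' \<Longrightarrow> r' < r \<Longrightarrow> T (r', c) = Empty"
      using h'[THEN conjunct2, THEN conjunct2, THEN conjunct1] by simp
    have f: "\<And>r c. (r, c) \<in> gB {1..k} lam m \<Longrightarrow>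
        (\<forall>r'. r' > r \<and> (r', c) \<in> gB {1..k} lam m \<longrightarrow> T (r', c) \<noteq> Alpha) \<Longrightarrow>
        (\<forall>c'. c' > c \<and> (r, c') \<in> gB {1..k} lam m \<longrightarrow> T (r, c') \<noteq> Beta) \<Longrightarrow> T (r, c) \<noteq> Empty"
      using h'[THEN conjunct2, THEN conjunct2, THEN conjunct2] by blast
    show "gcct {1..k} lam m T"
      unfolding gcct_def
    proof (intro conjI allI impI)
      fix p assume "p \<notin> gB {1..k} lam m" then show "T p = Empty" by (rule o)
    next
      fix r c c' assume "(r, c) \<in> gB {1..k} lam m" "T (r, c) = Beta" "c' < c"
      then show "T (r, c') = Empty"
        using b[of r c c'] o[of "(r, c')"] by (cases "c' = 0") (auto simp: gB_def)
    next
      fix r c r' assume "(r, c) \<in> gB {1..k} lam m" "T (r, c) = Alpha" "r' < r"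
      then show "T (r', c) = Empty"
        using a[of r c r'] o[of "(r', c)"] by (cases "r' = 0") (auto simp: gB_def)
    next
      fix r c assume rc: "(r, c) \<in> gB {1..k} lam m"
        and h1: "\<forall>r'>r. T (r', c) \<noteq> Alpha" and h2: "\<forall>c'>c. T (r, c') \<noteq> Beta"
      show "T (r, c) \<noteq> Empty" by (rule f[OF rc]) (use h1 h2 in auto)
    qed
  next
    assume g: "gcct {1..k} lam m T"
    note o = gcct_out[OF g] and b = gcct_beta[OF g] and a = gcct_alpha[OF g] and f = gcct_full[OF g]
    show "is_cct k lam T"
      unfolding is_cct_def be
    proof (intro conjI allI impI)
      fix p assume "p \<notin> gB {1..k} lam m" then show "T p = Empty" by (rule o)
    next
      fix r c c' assume "(r, c) \<in> gB {1..k} lam m" "T (r, c) = Beta" "1 \<le> c' \<and> c' < c"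
      then show "T (r, c') = Empty" using b by blast
    next
      fix r c r' assume "(r, c) \<in> gB {1..k} lam m" "T (r, c) = Alpha" "1 \<le> r' \<and> r' < r"
      then show "T (r', c) = Empty" using a by blast
    next
      fix r c assume rc: "(r, c) \<in> gB {1..k} lam m"
        and h1: "\<forall>r'. r < r' \<and> (r', c) \<in> gB {1..k} lam m \<longrightarrow> T (r', c) \<noteq> Alpha"
        and h2: "\<forall>c'. c < c' \<and> (r, c') \<in> gB {1..k} lam m \<longrightarrow> T (r, c') \<noteq> Beta"
      have "\<forall>r'>r. T (r', c) \<noteq> Alpha"
      proof (intro allI impI notI)
        fix r' assume "r < r'" "T (r', c) = Alpha"
        moreover then have "(r', c) \<in> gB {1..k} lam m" using o by force
        ultimately show False using h1 by blast
      qed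
      moreover have "\<forall>c'>c. T (r, c') \<noteq> Beta"
      proof (intro allI impI notI)
        fix c' assume "c < c'" "T (r, c') = Beta"
        moreover then have "(r, c') \<in> gB {1..k} lam m" using o by force
        ultimately show False using h2 by blast
      qed
      ultimately show "T (r, c) \<noteq> Empty" using f[OF rc] by blast
    qed
  qed
qed

lemma ext_le: "(\<And>j. 1 \<le> j \<Longrightarrow> j \<le> k \<Longrightarrow> f j \<le> m) \<Longrightarrow> ext k m f i \<le> m"
  unfolding ext_def by auto

lemma ext_iff:
  assumes fa: "antit k f" and fm: "\<And>j. 1 \<le> j \<Longrightarrow> j \<le> k \<Longrightarrow> f j \<le> m"
    and x: "1 \<le> x" "x \<le> m" and i: "i \<le> k"
  shows "(ext k m f (Suc i) < x \<and> x \<le> ext k m f i) \<longleftrightarrow> i = card {j \<in> {1..k}. x \<le> f j}"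
proof -
  define N where "N = card {j \<in> {1..k}. x \<le> f j}"
  have Nk: "N \<le> k" unfolding N_def by (rule card_le_k)
  have Q: "x \<le> ext k m f i' \<longleftrightarrow> i' \<le> N" if "i' \<le> Suc k" for i'
  proof (cases "i' = 0")
    case True then show ?thesis using x by (simp add: ext_def)
  next
    case False
    show ?thesis
    proof (cases "i' \<le> k")
      case True
      then have "ext k m f i' = f i'" using False by (simp add: ext_def)
      then show ?thesis using anti_iff[OF fa, of i' x] True False N_def by simp
    next
      case nk: False
      then have "ext k m f i' = 0" using False by (simp add: ext_def)
      then show ?thesis using x Nk nk by simp
    qed
  qed
  have "x \<le> ext k m f i \<longleftrightarrow> i \<le> N" using Q i by simp
  moreover have "x \<le> ext k m f (Suc i) \<longleftrightarrow> Suc i \<le> N" using Q i by simp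
  ultimately show ?thesis unfolding N_def[symmetric] by auto
qed


lemma path_beta_eq:
  assumes E: "E \<in> VV {1..k} lam m"
  shows "path_beta k (conjC k m E) = E 1"
proof -
  have Ek: "E 1 \<le> k"
  proof (cases "1 \<le> m")
    case True
    have "E 1 \<le> ell {1..k} lam 1" using VVDl[OF E, of 1] True by simp
    also have "\<dots> \<le> k" unfolding ell_def by (rule card_le_k)
    finally show ?thesis .
  next
    case False then have "E 1 = 0" using VVD0[OF E, of 1] by simp
    then show ?thesis by simp
  qed
  have "{i. 1 \<le> i \<and> i \<le> k \<and> conjC k m E i > 0} = {1..E 1}"
  proof (rule set_eqI)
    fix i
    show "i \<in> {i. 1 \<le> i \<and> i \<le> k \<and> conjC k m E i > 0} \<longleftrightarrow> i \<in> {1..E 1}"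
    proof (cases "1 \<le> i \<and> i \<le> k")
      case ik: True
      have cc: "conjC k m E i = card {x \<in> {1..m}. i \<le> E x}" using ik by (simp add: conjC_def)
      have "card {x \<in> {1..m}. i \<le> E x} > 0 \<longleftrightarrow> i \<le> E 1"
      proof
        assume "card {x \<in> {1..m}. i \<le> E x} > 0"
        then have "{x \<in> {1..m}. i \<le> E x} \<noteq> {}" by (rule contrapos_pn) simp
        then obtain x where x: "x \<in> {1..m}" "i \<le> E x" by blast
        have "E x \<le> E 1" using VVDa[OF E] x unfolding antit_def by simp
        then show "i \<le> E 1" using x by simp
      next
        assume h: "i \<le> E 1"
        have "1 \<le> m"
        proof (rule ccontr)
          assume "\<not> 1 \<le> m" then have "E 1 = 0" using VVD0[OF E, of 1] by simp
          then show False using h ik by simp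
        qed
        then have "1 \<in> {x \<in> {1..m}. i \<le> E x}" using h by simp
        then show "card {x \<in> {1..m}. i \<le> E x} > 0" by (subst card_gt_0_iff) auto
      qed
      then show ?thesis using cc ik by auto
    next
      case False
      then show ?thesis using Ek by auto
    qed
  qed
  then show ?thesis unfolding path_beta_def by simp
qed

lemma path_alpha_eq:
  assumes E: "E \<in> VV {1..k} lam m" and lamA: "antit k lam"
    and lm: "\<And>r. 1 \<le> r \<Longrightarrow> r \<le> k \<Longrightarrow> lam r \<le> m"
  shows "path_alpha k m lam (conjC k m E) = card {x \<in> {1..m}. E x < ell {1..k} lam x}"
proof -
  define C where "C = conjC k m E"
  have Cp: "is_cpath k lam C"
    using conj_bij(1)[OF lamA lm] E unfolding C_def bij_betw_def by blast
  have inv: "conjE k m C = E" using conj_bij(2)[OF lamA lm E] C_def by simp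
  have CA: "antit k C" by (rule pDa[OF Cp])
  have Cm: "C j \<le> m" if "1 \<le> j" "j \<le> k" for j
    using pDl[OF Cp that] lm[OF that] by simp
  have Ex: "E x = card {j \<in> {1..k}. x \<le> C j}" if "1 \<le> x" "x \<le> m" for x
    using inv that by (auto simp: conjE_def)
  have ellk: "ell {1..k} lam x \<le> k" for x unfolding ell_def by (rule card_le_k)
  have set: "{(i, x) \<in> west_steps k m C. \<not> (ext k m lam (Suc i) < x \<and> x \<le> ext k m lam i)}
      = (\<lambda>x. (E x, x)) ` {x \<in> {1..m}. E x < ell {1..k} lam x}"
  proof (rule set_eqI)
    fix p :: "nat \<times> nat"
    obtain i x where pe: "p = (i, x)" by force
    show "p \<in> {(i, x) \<in> west_steps k m C. \<not> (ext k m lam (Suc i) < x \<and> x \<le> ext k m lam i)}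
      \<longleftrightarrow> p \<in> (\<lambda>x. (E x, x)) ` {x \<in> {1..m}. E x < ell {1..k} lam x}"
    proof
      assume "p \<in> {(i, x) \<in> west_steps k m C. \<not> (ext k m lam (Suc i) < x \<and> x \<le> ext k m lam i)}"
      then have w: "i \<le> k" "ext k m C (Suc i) < x" "x \<le> ext k m C i"
        and nl: "\<not> (ext k m lam (Suc i) < x \<and> x \<le> ext k m lam i)"
        using pe by (auto simp: west_steps_def)
      have x1: "1 \<le> x" using w(2) by simp
      have "ext k m C i \<le> m" using ext_le[of k C m i] Cm by blast
      then have xm: "x \<le> m" using w(3) by simp
      have "i = E x" using ext_iff[OF CA Cm x1 xm w(1)] w Ex[OF x1 xm] by simp
      moreover have "i \<noteq> ell {1..k} lam x"
        using ext_iff[OF lamA lm x1 xm w(1)] nl by (simp add: ell_def)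
      moreover have "E x \<le> ell {1..k} lam x" using VVDl[OF E x1 xm] .
      ultimately have "i = E x" "E x < ell {1..k} lam x" by auto
      then show "p \<in> (\<lambda>x. (E x, x)) ` {x \<in> {1..m}. E x < ell {1..k} lam x}"
        unfolding pe by (intro image_eqI[where x = x]) (use x1 xm in auto)
    next
      assume "p \<in> (\<lambda>x. (E x, x)) ` {x \<in> {1..m}. E x < ell {1..k} lam x}"
      then have x: "1 \<le> x" "x \<le> m" "E x < ell {1..k} lam x" "i = E x" using pe by auto
      have ik: "i \<le> k" using x ellk[of x] by simp
      have "ext k m C (Suc i) < x \<and> x \<le> ext k m C i"
        using ext_iff[OF CA Cm x(1,2) ik] x(4) Ex[OF x(1,2)] by simp
      moreover have "\<not> (ext k m lam (Suc i) < x \<and> x \<le> ext k m lam i)"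
        using ext_iff[OF lamA lm x(1,2) ik] x(3,4) by (simp add: ell_def)
      ultimately show "p \<in> {(i, x) \<in> west_steps k m C. \<not> (ext k m lam (Suc i) < x \<and> x \<le> ext k m lam i)}"
        using pe ik by (simp add: west_steps_def)
    qed
  qed
  have "card ((\<lambda>x. (E x, x)) ` {x \<in> {1..m}. E x < ell {1..k} lam x}) = card {x \<in> {1..m}. E x < ell {1..k} lam x}"
    by (rule card_image) (auto simp: inj_on_def)
  then show ?thesis using set unfolding path_alpha_def C_def by simp
qed


lemma num_alpha_eq:
  assumes lm: "\<And>r. 1 \<le> r \<Longrightarrow> r \<le> k \<Longrightarrow> lam r \<le> m" and T: "is_cct k lam T"
  shows "num_alpha k lam T = card (alphas T)"
proof -
  have o: "\<And>p. p \<notin> boxes k lam \<Longrightarrow> T p = Empty" using T[unfolded is_cct_def, THEN conjunct1] by blast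
  have "{p \<in> boxes k lam. T p = Alpha} = alphas T"
  proof (rule set_eqI)
    fix p :: "nat \<times> nat"
    show "p \<in> {p \<in> boxes k lam. T p = Alpha} \<longleftrightarrow> p \<in> alphas T"
      using o[of p] by (cases "p \<in> boxes k lam") (auto simp: alphas_def)
  qed
  then show ?thesis by (simp add: num_alpha_def)
qed

lemma num_beta_eq:
  assumes lm: "\<And>r. 1 \<le> r \<Longrightarrow> r \<le> k \<Longrightarrow> lam r \<le> m" and T: "is_cct k lam T"
  shows "num_beta k lam T = Eof m T 1"
proof -
  have o: "\<And>p. p \<notin> boxes k lam \<Longrightarrow> T p = Empty" using T[unfolded is_cct_def, THEN conjunct1] by blast
  have eq: "{p \<in> boxes k lam. T p = Beta} = betas T 1"
  proof (rule set_eqI)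
    fix p :: "nat \<times> nat"
    obtain r c where pe: "p = (r, c)" by force
    show "p \<in> {p \<in> boxes k lam. T p = Beta} \<longleftrightarrow> p \<in> betas T 1"
    proof (cases "p \<in> boxes k lam")
      case True then have "1 \<le> c" using pe by (simp add: boxes_def)
      then show ?thesis using True pe by (simp add: betas_def)
    next
      case False then show ?thesis using o[of p] by (simp add: betas_def)
    qed
  qed
  have m0: "m = 0 \<Longrightarrow> betas T 1 = {}"
  proof -
    assume m0: "m = 0"
    have "boxes k lam = {}"
    proof (rule equals0I)
      fix p assume "p \<in> boxes k lam"
      then obtain r c where "p = (r, c)" "1 \<le> r" "r \<le> k" "1 \<le> c" "c \<le> lam r"
        unfolding boxes_def by blast
      then show False using lm[of r] m0 by simp
    qed
    then show "betas T 1 = {}" using o unfolding betas_def by auto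
  qed
  show ?thesis unfolding num_beta_def eq Eof_def using m0 by (cases "m = 0") simp_all
qed

theorem proposition3p1:
  fixes n k m :: nat and lam :: "nat \<Rightarrow> nat"
  assumes "1 \<le> k" and "k \<le> n" and "m = n - k"
    and "is_partition k m lam"
  shows "\<exists>\<Phi>. bij_betw \<Phi> {T. is_cct k lam T} {C. is_cpath k lam C} \<and>
           (\<forall>T. is_cct k lam T \<longrightarrow>
              symbol_product k lam T = path_wt k m lam (\<Phi> T) \<and>
              tableau_wt n k lam T = (k + fst (path_wt k m lam (\<Phi> T)),
                                      (n - k) + snd (path_wt k m lam (\<Phi> T))))"
proof -
  have P1: "\<And>i j. 1 \<le> i \<Longrightarrow> i \<le> j \<Longrightarrow> j \<le> k \<Longrightarrow> lam j \<le> lam i" and P2: "lam 1 \<le> m"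
    using assms(4) unfolding is_partition_def by blast+
  have lamA: "antit k lam" unfolding antit_def using P1 by blast
  have lm: "lam r \<le> m" if "1 \<le> r" "r \<le> k" for r
    using P1[of 1 r] that P2 by simp
  have fR: "finite {1..k::nat}" by simp
  have ci: "is_cct k lam T \<longleftrightarrow> gcct {1..k} lam m T" for T
    by (rule cct_iff) (rule lm)
  have bij1: "bij_betw (Eof m) {T. is_cct k lam T} (VV {1..k} lam m)"
    unfolding bij_betw_def
  proof
    show "inj_on (Eof m) {T. is_cct k lam T}"
      unfolding inj_on_def using L2[OF fR] ci by blast
    show "Eof m ` {T. is_cct k lam T} = VV {1..k} lam m"
    proof
      show "Eof m ` {T. is_cct k lam T} \<subseteq> VV {1..k} lam m"
        using L1[OF fR] ci by blast
      show "VV {1..k} lam m \<subseteq> Eof m ` {T. is_cct k lam T}"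
      proof
        fix E assume "E \<in> VV {1..k} lam m"
        then obtain T where "gcct {1..k} lam m T" "Eof m T = E" using L3[OF fR] by blast
        then show "E \<in> Eof m ` {T. is_cct k lam T}" using ci by blast
      qed
    qed
  qed
  have bij2: "bij_betw (conjC k m) (VV {1..k} lam m) {C. is_cpath k lam C}"
    by (rule conj_bij(1)[OF lamA]) (rule lm)
  define \<Phi> where "\<Phi> = (\<lambda>T. conjC k m (Eof m T))"
  have bij: "bij_betw \<Phi> {T. is_cct k lam T} {C. is_cpath k lam C}"
    using bij_betw_trans[OF bij1 bij2] unfolding \<Phi>_def comp_def .
  have wt: "symbol_product k lam T = path_wt k m lam (\<Phi> T)" if T: "is_cct k lam T" for T
  proof -
    have g: "gcct {1..k} lam m T" using ci T by blast
    have l1: "Eof m T \<in> VV {1..k} lam m"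
      "card (alphas T) = card {x \<in> {1..m}. Eof m T x < ell {1..k} lam x}"
      using L1[OF fR g] by blast+
    have "num_alpha k lam T = path_alpha k m lam (\<Phi> T)"
      using num_alpha_eq[OF lm T] l1(2) path_alpha_eq[OF l1(1) lamA lm] by (simp add: \<Phi>_def)
    moreover have "num_beta k lam T = path_beta k (\<Phi> T)"
      using num_beta_eq[OF lm T] path_beta_eq[OF l1(1)] by (simp add: \<Phi>_def)
    ultimately show ?thesis by (simp add: symbol_product_def path_wt_def)
  qed
  have "\<forall>T. is_cct k lam T \<longrightarrow>
              symbol_product k lam T = path_wt k m lam (\<Phi> T) \<and>
              tableau_wt n k lam T = (k + fst (path_wt k m lam (\<Phi> T)),
                                      (n - k) + snd (path_wt k m lam (\<Phi> T)))"
  proof (intro allI impI conjI)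
    fix T assume T: "is_cct k lam T"
    show "symbol_product k lam T = path_wt k m lam (\<Phi> T)" by (rule wt[OF T])
    then show "tableau_wt n k lam T = (k + fst (path_wt k m lam (\<Phi> T)),
                                      (n - k) + snd (path_wt k m lam (\<Phi> T)))"
      by (simp add: tableau_wt_def symbol_product_def prod_eq_iff)
  qed
  then show ?thesis using bij by blast
qed

end
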